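(* Let $\rho_{\Delta_{S-1}}=\max_{\boldsymbol{q},\boldsymbol{q}'\in\Delta_{S-1}}\|\boldsymbol{q}-\boldsymbol{q}'\|_2$ be the diameter of the simplex $\Delta_{S-1}$. Let $\boldsymbol{q}^*=\arg\min_{\boldsymbol{q}\in\Delta_{S-1}}\boldsymbol{q}^\top\Gamma\boldsymbol{q}-\boldsymbol{q}^\top\boldsymbol{d}$ and $\hat{\boldsymbol{q}}=\arg\min_{\boldsymbol{q}\in\Delta_{S-1}}\boldsymbol{q}^\top\widehat\Gamma\boldsymbol{q}-\boldsymbol{q}^\top\hat{\boldsymbol{d}}$. If $\lambda_{\min}(\Gamma)>0$, then \[ \|\hat{\boldsymbol{q}}-\boldsymbol{q}^*\|_2\le\frac{S\big(\|\widehat\Gamma-\Gamma\|_\infty+\tfrac12\|\hat{\boldsymbol{d}}-\boldsymbol{d}\|_\infty\big)}{\lambda_{\min}(\Gamma)}\wedge\rho_{\Delta_{S-1}}, \] where $\|\widehat\Gamma-\Gamma\|_\infty$ is the element-wise maximum absolute entry of the matrix and $\|\hat{\boldsymbol{d}}-\boldsymbol{d}\|_\infty$ the $\ell_\infty$ norm of the vector.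
   Context: $\Delta_{S-1}=\{\boldsymbol{q}\in\mathbb{R}^S:\sum_s q_s=1,\ \min_s q_s\ge0\}$. Functions $\tau^{(1)},\ldots,\tau^{(S)}$ are square integrable with respect to a probability distribution $Q_{\boldsymbol{X}}$, and $\Gamma$ is the $S\times S$ matrix $\Gamma_{k,l}=\mathbb{E}_{Q_{\boldsymbol{X}}}[\tau^{(k)}(\boldsymbol{X})\tau^{(l)}(\boldsymbol{X})]$ with diagonal vector $\boldsymbol{d}=(\Gamma_{1,1},\ldots,\Gamma_{S,S})^\top$. Given functions $\hat\tau^{(1)},\ldots,\hat\tau^{(S)}$ (estimators of the $\tau^{(s)}$) and points $\boldsymbol{X}^Q_1,\ldots,\boldsymbol{X}^Q_{n_Q}$, define $\widehat\Gamma_{k,l}=\frac{1}{n_Q}\sum_{i=1}^{n_Q}\hat\tau^{(k)}(\boldsymbol{X}^Q_i)\hat\tau^{(l)}(\boldsymbol{X}^Q_i)$ and $\hat d_s=\frac{1}{n_Q}\sum_{i=1}^{n_Q}(\hat\tau^{(s)}(\boldsymbol{X}^Q_i))^2$ (so $\hat{\boldsymbol{d}}$ is the diagonal of $\widehat\Gamma$). $\lambda_{\min}(\Gamma)$ is the smallest eigenvalue of $\Gamma$. *)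

theory Defs
  imports "HOL-Probability.Probability"
begin

text \<open>Probability prob_simplex Delta_{S-1}, with S = CARD('n).\<close>
definition prob_simplex :: "(real ^ 'n::finite) set" where
  "prob_simplex = {q. (\<Sum>s\<in>UNIV. q $ s) = 1 \<and> (\<forall>s. 0 \<le> q $ s)}"

definition simplex_diam :: "'n::finite itself \<Rightarrow> real" where
  "simplex_diam _ = Sup {norm (q - q') | q q'. q \<in> (prob_simplex :: (real ^ 'n) set) \<and> q' \<in> prob_simplex}"

definition eigenvalues :: "real ^ 'n::finite ^ 'n \<Rightarrow> real set" where
  "eigenvalues A = {c. \<exists>v. v \<noteq> 0 \<and> A *v v = c *\<^sub>R v}"

definition lambda_min :: "real ^ 'n::finite ^ 'n \<Rightarrow> real" where
  "lambda_min A = Min (eigenvalues A)"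

definition pop_Gram :: "'x measure \<Rightarrow> ('n \<Rightarrow> 'x \<Rightarrow> real) \<Rightarrow> real ^ 'n ^ 'n" where
  "pop_Gram Q tau = (\<chi> k l. integral\<^sup>L Q (\<lambda>x. tau k x * tau l x))"

definition emp_Gram :: "('n \<Rightarrow> 'x \<Rightarrow> real) \<Rightarrow> (nat \<Rightarrow> 'x) \<Rightarrow> nat \<Rightarrow> real ^ 'n ^ 'n" where
  "emp_Gram tauh X nQ = (\<chi> k l. (1 / real nQ) * (\<Sum>i=1..nQ. tauh k (X i) * tauh l (X i)))"

definition diag_vec :: "real ^ 'n ^ 'n \<Rightarrow> real ^ 'n" where
  "diag_vec A = (\<chi> s. A $ s $ s)"

definition qobj :: "real ^ 'n ^ 'n \<Rightarrow> real ^ 'n \<Rightarrow> real ^ 'n \<Rightarrow> real" where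
  "qobj G d q = q \<bullet> (G *v q) - q \<bullet> d"

definition mat_max_norm :: "real ^ 'n::finite ^ 'n \<Rightarrow> real" where
  "mat_max_norm A = Max {\<bar>A $ k $ l\<bar> | k l. True}"

definition vec_inf_norm :: "real ^ 'n::finite \<Rightarrow> real" where
  "vec_inf_norm v = Max {\<bar>v $ s\<bar> | s. True}"

end

theory Submission
  imports Defs
begin

lemma sym_inner:
  fixes A :: "real^'n::finite^'n"
  assumes "transpose A = A"
  shows "x \<bullet> (A *v y) = (A *v x) \<bullet> y"
proof -
  have "x \<bullet> (A *v y) = (x v* A) \<bullet> y" by (simp add: dot_lmul_matrix)
  also have "x v* A = x v* transpose A" using assms by simp
  also have "\<dots> = A *v x" by simp
  finally show ?thesis .
qed

lemma small_pos:
  fixes a C :: real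
  assumes "\<And>s. s > 0 \<Longrightarrow> 2 * s * a \<le> s^2 * C"
  shows "a \<le> 0"
proof (rule ccontr)
  assume "\<not> a \<le> 0"
  hence a: "a > 0" by simp
  define s where "s = a / (\<bar>C\<bar> + 1)"
  have sp: "s > 0" using a by (simp add: s_def)
  have "2 * s * a \<le> s^2 * C" using assms sp by blast
  hence "2 * a \<le> s * C" using sp by (simp add: power2_eq_square)
  also have "s * C \<le> s * \<bar>C\<bar>" using sp by (simp add: mult_left_mono)
  also have "\<dots> < a" using a by (simp add: s_def field_simps)
  finally show False using a by simp
qed

lemma rayleigh:
  fixes A :: "real^'n::finite^'n"
  assumes sym: "transpose A = A"
  shows "\<exists>m v0. norm v0 = 1 \<and> A *v v0 = m *\<^sub>R v0 \<and> (\<forall>u. m * (norm u)^2 \<le> u \<bullet> (A *v u))"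
proof -
  let ?f = "\<lambda>v. v \<bullet> (A *v v)"
  have cont: "continuous_on (sphere 0 1) ?f"
    by (intro continuous_intros)
  have ne: "sphere (0::real^'n) 1 \<noteq> {}"
  proof -
    have "axis undefined (1::real) \<in> sphere (0::real^'n) 1" by simp
    thus ?thesis by blast
  qed
  obtain v0 where v0: "v0 \<in> sphere 0 1" and mn: "\<And>y. y \<in> sphere 0 1 \<Longrightarrow> ?f v0 \<le> ?f y"
    using continuous_attains_inf[OF compact_sphere ne cont] by blast
  define m where "m = ?f v0"
  have nv0: "norm v0 = 1" using v0 by simp
  have hom: "m * (norm u)^2 \<le> u \<bullet> (A *v u)" for u
  proof (cases "u = 0")
    case True then show ?thesis by simp
  next
    case False
    define y where "y = (1 / norm u) *\<^sub>R u"
    have "y \<in> sphere 0 1" using False by (simp add: y_def)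
    hence "m \<le> ?f y" using mn m_def by blast
    also have "?f y = (1 / norm u)^2 * ?f u"
      by (simp add: y_def matrix_vector_mult_scaleR power2_eq_square)
    finally have "m \<le> (1 / norm u)^2 * ?f u" .
    hence "m * (norm u)^2 \<le> (1 / norm u)^2 * ?f u * (norm u)^2"
      by (simp add: mult_right_mono)
    also have "\<dots> = ?f u" using False by (simp add: field_simps)
    finally show ?thesis .
  qed
  define w where "w = A *v v0 - m *\<^sub>R v0"
  have v0v0: "v0 \<bullet> v0 = 1" using nv0 by (simp add: dot_square_norm)
  have wv0: "v0 \<bullet> w = 0" by (simp add: w_def inner_diff_right m_def v0v0)
  have wA: "w \<bullet> (A *v v0) = w \<bullet> w"
  proof -
    have "A *v v0 = w + m *\<^sub>R v0" by (simp add: w_def)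
    hence "w \<bullet> (A *v v0) = w \<bullet> w + m * (w \<bullet> v0)" by (simp add: inner_add_right)
    thus ?thesis using wv0 by (simp add: inner_commute)
  qed
  have "w \<bullet> w \<le> 0"
  proof (rule small_pos[where C = "w \<bullet> (A *v w) - m * (w \<bullet> w)"])
    fix s :: real assume "s > 0"
    define u where "u = v0 - s *\<^sub>R w"
    have "m * (norm u)^2 \<le> u \<bullet> (A *v u)" by (rule hom)
    moreover have "(norm u)^2 = 1 + s^2 * (w \<bullet> w)"
      unfolding u_def power2_norm_eq_inner
      by (simp add: inner_diff_left inner_diff_right v0v0 wv0 inner_commute power2_eq_square)
    moreover have "u \<bullet> (A *v u) = m - 2 * s * (w \<bullet> w) + s^2 * (w \<bullet> (A *v w))"
    proof -
      have e: "v0 \<bullet> (A *v w) = w \<bullet> (A *v v0)"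
        using sym_inner[OF sym, of v0 w] by (simp add: inner_commute)
      show ?thesis unfolding u_def
        by (simp add: matrix_vector_mult_diff_distrib matrix_vector_mult_scaleR
            inner_diff_left inner_diff_right e wA m_def power2_eq_square algebra_simps)
    qed
    ultimately have "m * (1 + s^2 * (w \<bullet> w)) \<le> m - 2 * s * (w \<bullet> w) + s^2 * (w \<bullet> (A *v w))"
      by simp
    thus "2 * s * (w \<bullet> w) \<le> s^2 * ((w \<bullet> (A *v w) - m * (w \<bullet> w)))"
      by (simp add: algebra_simps)
  qed
  hence "w = 0" by (meson inner_ge_zero inner_eq_zero_iff antisym)
  hence "A *v v0 = m *\<^sub>R v0" by (simp add: w_def)
  thus ?thesis using nv0 hom by blast
qed

lemma eig_finite:
  fixes A :: "real^'n::finite^'n"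
  assumes sym: "transpose A = A"
  shows "finite (eigenvalues A)"
proof -
  let ?E = "eigenvalues A"
  define V where "V c = (SOME v. v \<noteq> 0 \<and> A *v v = c *\<^sub>R v)" for c
  have V: "V c \<noteq> 0 \<and> A *v V c = c *\<^sub>R V c" if "c \<in> ?E" for c
  proof -
    have "\<exists>v. v \<noteq> 0 \<and> A *v v = c *\<^sub>R v" using that unfolding eigenvalues_def by simp
    thus ?thesis unfolding V_def by (rule someI_ex)
  qed
  have inj: "inj_on V ?E"
  proof (rule inj_onI)
    fix c d assume c: "c \<in> ?E" and d: "d \<in> ?E" and e: "V c = V d"
    have "c *\<^sub>R V c = d *\<^sub>R V c" using V[OF c] V[OF d] e by metis
    thus "c = d" using V[OF c] by (simp add: scaleR_cancel_right)
  qed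
  have "pairwise orthogonal (V ` ?E)"
  proof (rule pairwiseI)
    fix x y assume "x \<in> V ` ?E" "y \<in> V ` ?E" "x \<noteq> y"
    then obtain c d where c: "c \<in> ?E" and d: "d \<in> ?E" and xy: "x = V c" "y = V d" by blast
    have cd: "c \<noteq> d" using xy \<open>x \<noteq> y\<close> by blast
    have "c * (x \<bullet> y) = (A *v x) \<bullet> y" using V[OF c] xy by simp
    also have "\<dots> = x \<bullet> (A *v y)" using sym_inner[OF sym] by simp
    also have "\<dots> = d * (x \<bullet> y)" using V[OF d] xy by simp
    finally have "(c - d) * (x \<bullet> y) = 0" by (simp add: algebra_simps)
    thus "orthogonal x y" using cd by (simp add: orthogonal_def)
  qed
  moreover have "0 \<notin> V ` ?E" using V by auto
  ultimately have "independent (V ` ?E)" by (rule pairwise_orthogonal_independent)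
  hence "finite (V ` ?E)" using independent_bound by blast
  thus ?thesis using inj finite_imageD by blast
qed

lemma lambda_min_le:
  fixes A :: "real^'n::finite^'n"
  assumes sym: "transpose A = A"
  shows "lambda_min A * (norm u)^2 \<le> u \<bullet> (A *v u)"
proof -
  obtain m v0 where nv: "norm v0 = 1" and ev: "A *v v0 = m *\<^sub>R v0"
    and h: "\<And>u. m * (norm u)^2 \<le> u \<bullet> (A *v u)"
    using rayleigh[OF sym] by blast
  have "m \<in> eigenvalues A" unfolding eigenvalues_def using nv ev by (auto intro!: exI[of _ v0])
  hence "lambda_min A \<le> m" unfolding lambda_min_def using eig_finite[OF sym] by simp
  hence "lambda_min A * (norm u)^2 \<le> m * (norm u)^2" by (simp add: mult_right_mono)
  also have "\<dots> \<le> u \<bullet> (A *v u)" by (rule h)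
  finally show ?thesis .
qed

lemma small_pos2:
  fixes a b :: real
  assumes "\<And>t. 0 < t \<Longrightarrow> t \<le> 1 \<Longrightarrow> 0 \<le> a + t * b"
  shows "0 \<le> a"
proof (rule ccontr)
  assume "\<not> 0 \<le> a"
  hence a: "a < 0" by simp
  define t where "t = min 1 (- a / (\<bar>b\<bar> + 1))"
  have tp: "0 < t" "t \<le> 1" using a by (auto simp: t_def divide_neg_pos add_pos_nonneg)
  have "t * b \<le> t * \<bar>b\<bar>" using tp by (simp add: mult_left_mono)
  also have "\<dots> \<le> (- a / (\<bar>b\<bar> + 1)) * \<bar>b\<bar>" unfolding t_def by (intro mult_right_mono) auto
  also have "\<dots> < - a" using a by (simp add: field_simps)
  finally have "a + t * b < 0" by simp
  thus False using assms tp by force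
qed

lemma simplex_comb:
  assumes "q0 \<in> prob_simplex" "q \<in> prob_simplex" "0 \<le> t" "t \<le> 1"
  shows "q0 + t *\<^sub>R (q - q0) \<in> prob_simplex"
proof -
  have e: "(q0 + t *\<^sub>R (q - q0)) $ s = (1 - t) * q0 $ s + t * q $ s" for s
    by (simp add: algebra_simps)
  have "0 \<le> (1 - t) * q0 $ s + t * q $ s" for s
    using assms unfolding prob_simplex_def by simp
  moreover have "(\<Sum>s\<in>UNIV. (1 - t) * q0 $ s + t * q $ s) = 1"
    using assms unfolding prob_simplex_def by (simp add: sum.distrib sum_distrib_left[symmetric])
  ultimately show ?thesis unfolding prob_simplex_def mem_Collect_eq e by simp
qed

lemma first_order:
  fixes M :: "real^'n::finite^'n"
  assumes sym: "transpose M = M" and q0: "q0 \<in> prob_simplex"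
    and opt: "\<And>q. q \<in> prob_simplex \<Longrightarrow> qobj M d q0 \<le> qobj M d q"
    and q: "q \<in> prob_simplex"
  shows "0 \<le> 2 * ((q - q0) \<bullet> (M *v q0)) - (q - q0) \<bullet> d"
proof (rule small_pos2[where b = "(q - q0) \<bullet> (M *v (q - q0))"])
  fix t :: real assume t: "0 < t" "t \<le> 1"
  define w where "w = q - q0"
  have "qobj M d q0 \<le> qobj M d (q0 + t *\<^sub>R w)"
    using opt simplex_comb[OF q0 q] t w_def by simp
  moreover have "qobj M d (q0 + t *\<^sub>R w) = qobj M d q0
      + t * (2 * (w \<bullet> (M *v q0)) - w \<bullet> d) + t^2 * (w \<bullet> (M *v w))"
  proof -
    have e: "q0 \<bullet> (M *v w) = w \<bullet> (M *v q0)"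
      using sym_inner[OF sym, of q0 w] by (simp add: inner_commute)
    show ?thesis unfolding qobj_def
      by (simp add: matrix_vector_right_distrib matrix_vector_mult_scaleR
            inner_add_left inner_add_right e power2_eq_square algebra_simps)
  qed
  ultimately have "0 \<le> t * ((2 * (w \<bullet> (M *v q0)) - w \<bullet> d) + t * (w \<bullet> (M *v w)))"
    by (simp add: power2_eq_square algebra_simps)
  hence "0 \<le> (2 * (w \<bullet> (M *v q0)) - w \<bullet> d) + t * (w \<bullet> (M *v w))"
    using t by (simp add: zero_le_mult_iff)
  thus "0 \<le> 2 * ((q - q0) \<bullet> (M *v q0)) - (q - q0) \<bullet> d + t * ((q - q0) \<bullet> (M *v (q - q0)))"
    by (simp add: w_def)
qed

lemma mat_max_ge: "\<bar>A $ k $ l\<bar> \<le> mat_max_norm (A :: real^'n::finite^'n)"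
proof -
  have "{\<bar>A $ k $ l\<bar> | k l. True} \<subseteq> (\<lambda>p. \<bar>A $ fst p $ snd p\<bar>) ` UNIV"
    by (auto intro!: image_eqI[where x="(k, l)" for k l])
  hence fin: "finite {\<bar>A $ k $ l\<bar> | k l. True}" by (rule finite_subset) simp
  have mem: "\<bar>A $ k $ l\<bar> \<in> {\<bar>A $ k' $ l'\<bar> | k' l'. True}" by blast
  show ?thesis unfolding mat_max_norm_def by (rule Max_ge[OF fin mem])
qed

lemma vec_inf_ge: "\<bar>v $ s\<bar> \<le> vec_inf_norm (v :: real^'n::finite)"
proof -
  have "{\<bar>v $ s\<bar> | s. True} \<subseteq> (\<lambda>s. \<bar>v $ s\<bar>) ` UNIV" by auto
  hence fin: "finite {\<bar>v $ s\<bar> | s. True}" by (rule finite_subset) simp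
  have mem: "\<bar>v $ s\<bar> \<in> {\<bar>v $ s'\<bar> | s'. True}" by blast
  show ?thesis unfolding vec_inf_norm_def by (rule Max_ge[OF fin mem])
qed

lemma matvec_bound:
  fixes E :: "real^'n::finite^'n"
  assumes "q \<in> prob_simplex"
  shows "\<bar>(E *v q) $ k\<bar> \<le> mat_max_norm E"
proof -
  have q: "\<And>s. 0 \<le> q $ s" "(\<Sum>s\<in>UNIV. q $ s) = 1" using assms unfolding prob_simplex_def by auto
  have "\<bar>(E *v q) $ k\<bar> = \<bar>\<Sum>l\<in>UNIV. E $ k $ l * q $ l\<bar>" by (simp add: matrix_vector_mult_def)
  also have "\<dots> \<le> (\<Sum>l\<in>UNIV. \<bar>E $ k $ l * q $ l\<bar>)" by (rule sum_abs)
  also have "\<dots> \<le> (\<Sum>l\<in>UNIV. mat_max_norm E * q $ l)"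
  proof (rule sum_mono)
    fix l
    have "\<bar>E $ k $ l * q $ l\<bar> = \<bar>E $ k $ l\<bar> * q $ l" using q(1)[of l] by (simp add: abs_mult)
    also have "\<dots> \<le> mat_max_norm E * q $ l" by (rule mult_right_mono[OF mat_max_ge q(1)])
    finally show "\<bar>E $ k $ l * q $ l\<bar> \<le> mat_max_norm E * q $ l" .
  qed
  also have "\<dots> = mat_max_norm E" using q(2) by (simp add: sum_distrib_left[symmetric])
  finally show ?thesis .
qed

lemma inner_bound:
  fixes v w :: "real^'n::finite"
  assumes "\<And>k. \<bar>v $ k\<bar> \<le> B"
  shows "\<bar>w \<bullet> v\<bar> \<le> B * (\<Sum>k\<in>UNIV. \<bar>w $ k\<bar>)"
proof -
  have "\<bar>w \<bullet> v\<bar> = \<bar>\<Sum>k\<in>UNIV. w $ k * v $ k\<bar>" by (simp add: inner_vec_def)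
  also have "\<dots> \<le> (\<Sum>k\<in>UNIV. \<bar>w $ k\<bar> * B)"
  proof (rule order_trans[OF sum_abs], rule sum_mono)
    fix k
    show "\<bar>w $ k * v $ k\<bar> \<le> \<bar>w $ k\<bar> * B" unfolding abs_mult
      by (rule mult_left_mono[OF assms abs_ge_zero])
  qed
  finally show ?thesis by (simp add: sum_distrib_left mult.commute)
qed

lemma l1_l2:
  fixes w :: "real^'n::finite"
  shows "(\<Sum>k\<in>UNIV. \<bar>w $ k\<bar>) \<le> sqrt (real CARD('n)) * norm w"
proof -
  have "(\<Sum>k\<in>UNIV. \<bar>w $ k\<bar> * \<bar>1::real\<bar>) \<le> L2_set (\<lambda>k. w $ k) UNIV * L2_set (\<lambda>k::'n. 1::real) UNIV"
    by (rule L2_set_mult_ineq)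
  moreover have "L2_set (\<lambda>k::'n. 1::real) UNIV = sqrt (real CARD('n))" by (simp add: L2_set_def)
  moreover have "norm w = L2_set (\<lambda>k. w $ k) UNIV" by (simp add: norm_vec_def L2_set_def)
  ultimately show ?thesis by (simp add: mult.commute)
qed

lemma simplex_norm: "q \<in> prob_simplex \<Longrightarrow> norm q \<le> 1"
  using norm_le_l1_cart[of q] unfolding prob_simplex_def by simp

lemma diam_ge:
  assumes "q \<in> (prob_simplex :: (real^'n::finite) set)" "q' \<in> prob_simplex"
  shows "norm (q - q') \<le> simplex_diam TYPE('n)"
proof -
  let ?D = "{norm (q - q') |q q'. q \<in> (prob_simplex :: (real^'n) set) \<and> q' \<in> prob_simplex}"
  have mem: "norm (q - q') \<in> ?D"
    by (rule CollectI, rule exI[of _ q], rule exI[of _ q']) (simp add: assms)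
  have bdd: "bdd_above ?D"
  proof (rule bdd_aboveI)
    fix x assume "x \<in> ?D"
    hence "\<exists>a b. x = norm (a - b) \<and> a \<in> (prob_simplex :: (real^'n) set) \<and> b \<in> prob_simplex"
      by (simp only: mem_Collect_eq)
    then obtain a b where ab: "x = norm (a - b)" "a \<in> (prob_simplex :: (real^'n) set)" "b \<in> prob_simplex"
      by (elim exE conjE)
    have "norm (a - b) \<le> norm a + norm b" by (rule norm_triangle_ineq4)
    thus "x \<le> 2" using ab simplex_norm[OF ab(2)] simplex_norm[OF ab(3)] by linarith
  qed
  show ?thesis unfolding simplex_diam_def by (rule cSup_upper[OF mem bdd])
qed

lemma pop_sym: "transpose (pop_Gram Q tau) = pop_Gram Q tau"
  by (simp add: transpose_def pop_Gram_def vec_eq_iff mult.commute)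

lemma emp_sym: "transpose (emp_Gram tauh X nQ) = emp_Gram tauh X nQ"
  by (simp add: transpose_def emp_Gram_def vec_eq_iff mult.commute)

theorem lemma1:
  fixes Q :: "'x measure"
    and tau tauh :: "'n::finite \<Rightarrow> 'x \<Rightarrow> real"
    and X :: "nat \<Rightarrow> 'x"
    and nQ :: nat
    and qstar qhat :: "real ^ 'n"
  assumes "prob_space Q"
    and "\<And>s. tau s \<in> borel_measurable Q"
    and "\<And>s. integrable Q (\<lambda>x. (tau s x)\<^sup>2)"
    and "qstar \<in> prob_simplex"
    and "\<And>q. q \<in> prob_simplex \<Longrightarrow>
           qobj (pop_Gram Q tau) (diag_vec (pop_Gram Q tau)) qstar
             \<le> qobj (pop_Gram Q tau) (diag_vec (pop_Gram Q tau)) q"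
    and "qhat \<in> prob_simplex"
    and "\<And>q. q \<in> prob_simplex \<Longrightarrow>
           qobj (emp_Gram tauh X nQ) (diag_vec (emp_Gram tauh X nQ)) qhat
             \<le> qobj (emp_Gram tauh X nQ) (diag_vec (emp_Gram tauh X nQ)) q"
    and "lambda_min (pop_Gram Q tau) > 0"
  shows "norm (qhat - qstar)
    \<le> min (real CARD('n) * (mat_max_norm (emp_Gram tauh X nQ - pop_Gram Q tau)
              + (1/2) * vec_inf_norm (diag_vec (emp_Gram tauh X nQ) - diag_vec (pop_Gram Q tau)))
            / lambda_min (pop_Gram Q tau))
           (simplex_diam TYPE('n))"
proof -
  let ?G = "pop_Gram Q tau" and ?H = "emp_Gram tauh X nQ"
  define E where "E = ?H - ?G"
  define e where "e = diag_vec ?H - diag_vec ?G"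
  define D where "D = qhat - qstar"
  define L where "L = (\<Sum>k\<in>UNIV. \<bar>D $ k\<bar>)"
  define K where "K = mat_max_norm E + (1/2) * vec_inf_norm e"
  define lam where "lam = lambda_min ?G"
  have lam: "lam > 0" using assms(8) by (simp add: lam_def)
  have "0 \<le> mat_max_norm E" using mat_max_ge[of E undefined undefined] abs_ge_zero order_trans by blast
  moreover have "0 \<le> vec_inf_norm e" using vec_inf_ge[of e undefined] abs_ge_zero order_trans by blast
  ultimately have K0: "0 \<le> K" unfolding K_def by simp
  have f1: "0 \<le> 2 * (D \<bullet> (?G *v qstar)) - D \<bullet> diag_vec ?G"
    using first_order[OF pop_sym assms(4) assms(5) assms(6)] by (simp add: D_def)
  have f2: "0 \<le> 2 * ((qstar - qhat) \<bullet> (?H *v qhat)) - (qstar - qhat) \<bullet> diag_vec ?H"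
    using first_order[OF emp_sym assms(6) assms(7) assms(4)] .
  have Hq: "?H *v qhat = ?G *v qstar + ?G *v D + E *v qhat"
  proof -
    have "?H = ?G + E" by (simp add: E_def)
    hence "?H *v qhat = ?G *v qhat + E *v qhat" by (simp add: matrix_vector_mult_add_rdistrib)
    moreover have "?G *v qhat = ?G *v qstar + ?G *v D"
    proof -
      have "qhat = qstar + D" by (simp add: D_def)
      hence "?G *v qhat = ?G *v (qstar + D)" by (rule arg_cong)
      also have "\<dots> = ?G *v qstar + ?G *v D" by (rule matrix_vector_right_distrib)
      finally show ?thesis .
    qed
    ultimately show ?thesis by (simp only: add.assoc)
  qed
  have mD: "qstar - qhat = - D" by (simp add: D_def)
  have f2': "0 \<le> - 2 * (D \<bullet> (?G *v qstar)) - 2 * (D \<bullet> (?G *v D)) - 2 * (D \<bullet> (E *v qhat))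
      + D \<bullet> diag_vec ?H"
    using f2 unfolding mD Hq by (simp add: inner_add_right)
  have de: "D \<bullet> e = D \<bullet> diag_vec ?H - D \<bullet> diag_vec ?G" by (simp add: e_def inner_diff_right)
  have main: "2 * (D \<bullet> (?G *v D)) \<le> - 2 * (D \<bullet> (E *v qhat)) + D \<bullet> e"
    using f1 f2' de by linarith
  have b1: "\<bar>D \<bullet> (E *v qhat)\<bar> \<le> mat_max_norm E * L"
    unfolding L_def by (rule inner_bound, rule matvec_bound[OF assms(6)])
  have b2: "\<bar>D \<bullet> e\<bar> \<le> vec_inf_norm e * L"
    unfolding L_def by (rule inner_bound, rule vec_inf_ge)
  have ray: "lam * (norm D)^2 \<le> D \<bullet> (?G *v D)"
    unfolding lam_def by (rule lambda_min_le[OF pop_sym])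
  have key: "lam * (norm D)^2 \<le> L * K"
  proof -
    have "- (D \<bullet> (E *v qhat)) \<le> mat_max_norm E * L" using b1 by linarith
    moreover have "D \<bullet> e \<le> vec_inf_norm e * L" using b2 by linarith
    ultimately have "2 * (D \<bullet> (?G *v D)) \<le> 2 * (L * K)"
      using main unfolding K_def by (simp add: algebra_simps)
    thus ?thesis using ray by linarith
  qed
  have L2: "L \<le> sqrt (real CARD('n)) * norm D" unfolding L_def by (rule l1_l2)
  have S1: "1 \<le> real CARD('n)" by simp
  have sq: "sqrt (real CARD('n)) \<le> real CARD('n)"
  proof -
    have g: "1 \<le> sqrt (real CARD('n))" using S1 by simp
    have "sqrt (real CARD('n)) * 1 \<le> sqrt (real CARD('n)) * sqrt (real CARD('n))"
      by (rule mult_left_mono[OF g]) simp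
    thus ?thesis by simp
  qed
  have bnd: "norm D \<le> real CARD('n) * K / lam"
  proof (cases "norm D = 0")
    case True
    then show ?thesis using K0 lam by simp
  next
    case False
    hence nD: "norm D > 0" by simp
    have "lam * (norm D)^2 \<le> sqrt (real CARD('n)) * norm D * K"
      using key L2 K0 by (meson mult_right_mono order_trans)
    hence "lam * norm D \<le> sqrt (real CARD('n)) * K"
      using nD by (simp add: power2_eq_square algebra_simps)
    also have "\<dots> \<le> real CARD('n) * K" by (rule mult_right_mono[OF sq K0])
    finally show ?thesis using lam by (simp add: field_simps)
  qed
  have "norm D \<le> simplex_diam TYPE('n)" unfolding D_def by (rule diam_ge[OF assms(6) assms(4)])
  thus ?thesis using bnd unfolding D_def K_def E_def e_def lam_def by simp
qed

end
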